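(* Let $\lambda\in\mathbb{C}$, fix $a,b\in\mathbb{C}$ with $a^2=-\lambda$ and $b^2=1-\lambda$ (i.e. $a=(-\lambda)^{1/2}$, $b=(1-\lambda)^{1/2}$), and let $\phi:\mathbb{Z}^2\to\mathbb{C}$ be a (generic, nonvanishing) solution of \[ \frac{\widetilde{\overline\phi}}{\phi}=\frac{b\,\overline\phi-a\,\widetilde\phi}{b\,\widetilde\phi-a\,\overline\phi}. \] Then \[ u=\frac{a\,\overline\phi-b\,\widetilde\phi}{\phi},\qquad v=a\,\frac{\overline\phi}{\phi} \] satisfy respectively the dKdV equation $\widetilde{\overline u}-u=\frac1{\widetilde u}-\frac1{\overline u}$ and the equation \[ \big(v\,\overline v-\widetilde v\,\widetilde{\overline v}\big)^2+\big(v-\widetilde{\overline v}\big)\big(\overline v-\widetilde v\big)\big(\lambda-v\,\overline v\big)\big(\lambda-\widetilde v\,\widetilde{\overline v}\big)=0. \]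
   Context: Shift notation: for $f:\mathbb{Z}^2\to\mathbb{C}$, $f=f_{l,m}$, $\overline f=f_{l+1,m}$, $\widetilde f=f_{l,m+1}$, $\widetilde{\overline f}=f_{l+1,m+1}$. *)

theory Defs
  imports "HOL-Analysis.Analysis"
begin

end

theory Submission
  imports Defs
begin

lemma aux1:
  fixes A B C D P Q X Y :: complex
  assumes "P \<noteq> 0" "Q \<noteq> 0" "X \<noteq> 0" "Y \<noteq> 0"
   and "A*Q*X*Y - B*P*X*Y = C*P*Q*Y - D*P*Q*X"
  shows "A/P - B/Q = C/X - D/Y"
  using assms by (simp add: field_simps)

lemma L1:
  fixes a b p00 p10 p01 p11 p20 p02 p21 p12 :: complex
  assumes hb: "b^2 = 1 + a^2"
  and n: "p00 \<noteq> 0" "p10 \<noteq> 0" "p01 \<noteq> 0" "p11 \<noteq> 0"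
  and g: "a*p11 - b*p02 \<noteq> 0" "a*p20 - b*p11 \<noteq> 0"
  and e1: "p11*(b*p01 - a*p10) = p00*(b*p10 - a*p01)"
  and e2: "p21*(b*p11 - a*p20) = p10*(b*p20 - a*p11)"
  and e3: "p12*(b*p02 - a*p11) = p01*(b*p11 - a*p02)"
  shows "(a*p21 - b*p12)/p11 - (a*p10 - b*p01)/p00 = p01/(a*p11 - b*p02) - p10/(a*p20 - b*p11)"
proof -
  have "(a*p21 - b*p12)*p00*(a*p11 - b*p02)*(a*p20 - b*p11) - (a*p10 - b*p01)*p11*(a*p11 - b*p02)*(a*p20 - b*p11)
      = p01*p11*p00*(a*p20 - b*p11) - p10*p11*p00*(a*p11 - b*p02)"
    using hb e1 e2 e3 by algebra
  then show ?thesis using n g by (intro aux1) auto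
qed

lemma L2:
  fixes a b c p00 p10 p01 p11 p20 p21 V V1 V2 V12 :: complex
  assumes hb: "b^2 = 1 + a^2" and hl: "c = -(a^2)"
  and n: "p00 \<noteq> 0" "p10 \<noteq> 0" "p01 \<noteq> 0" "p11 \<noteq> 0"
  and e1: "p11*(b*p01 - a*p10) = p00*(b*p10 - a*p01)"
  and e2: "p21*(b*p11 - a*p20) = p10*(b*p20 - a*p11)"
  and v: "V*p00 = a*p10" "V1*p10 = a*p20" "V2*p01 = a*p11" "V12*p11 = a*p21"
  shows "(V*V1 - V2*V12)^2 + (V - V12)*(V1-V2)*(c - V*V1)*(c - V2*V12) = 0"
  using assms by algebra

theorem mainTheorem5:
  fixes lam a b :: complex and phi :: "int \<Rightarrow> int \<Rightarrow> complex"
    and u v :: "int \<Rightarrow> int \<Rightarrow> complex"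
  assumes ha: "a\<^sup>2 = - lam" and hb: "b\<^sup>2 = 1 - lam"
    and nz: "\<And>l m. phi l m \<noteq> 0"
    and gen1: "\<And>l m. b * phi l (m+1) - a * phi (l+1) m \<noteq> 0"
    and gen2: "\<And>l m. a * phi (l+1) m - b * phi l (m+1) \<noteq> 0"
    and eq: "\<And>l m. phi (l+1) (m+1) / phi l m
               = (b * phi (l+1) m - a * phi l (m+1)) / (b * phi l (m+1) - a * phi (l+1) m)"
  defines "u \<equiv> \<lambda>l m. (a * phi (l+1) m - b * phi l (m+1)) / phi l m"
    and "v \<equiv> \<lambda>l m. a * phi (l+1) m / phi l m"
  shows "(\<forall>l m. u (l+1) (m+1) - u l m = 1 / u l (m+1) - 1 / u (l+1) m)
       \<and> (\<forall>l m. (v l m * v (l+1) m - v l (m+1) * v (l+1) (m+1))\<^sup>2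
                 + (v l m - v (l+1) (m+1)) * (v (l+1) m - v l (m+1))
                   * (lam - v l m * v (l+1) m) * (lam - v l (m+1) * v (l+1) (m+1)) = 0)"
proof -
  have ee: "phi (l+1) (m+1) * (b * phi l (m+1) - a * phi (l+1) m) = phi l m * (b * phi (l+1) m - a * phi l (m+1))" for l m
  proof -
    have "phi (l+1) (m+1) = phi l m * (b * phi (l+1) m - a * phi l (m+1)) / (b * phi l (m+1) - a * phi (l+1) m)"
      using eq[of l m] nz[of l m] by (simp add: field_simps)
    then show ?thesis using gen1[of l m] by (simp add: field_simps)
  qed
  have hb': "b^2 = 1 + a^2" using ha hb by simp
  have hl: "lam = -(a^2)" using ha by simp
  have P1: "u (l+1) (m+1) - u l m = 1 / u l (m+1) - 1 / u (l+1) m" for l m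
  proof -
    have "(a*phi (l+1+1) (m+1) - b*phi (l+1) (m+1+1))/phi (l+1) (m+1) - (a*phi (l+1) m - b*phi l (m+1))/phi l m
       = phi l (m+1)/(a*phi (l+1) (m+1) - b*phi l (m+1+1)) - phi (l+1) m/(a*phi (l+1+1) m - b*phi (l+1) (m+1))"
      by (rule L1[OF hb' nz nz nz nz gen2 gen2 ee ee ee])
    then show ?thesis unfolding u_def by simp
  qed
  have P2: "(v l m * v (l+1) m - v l (m+1) * v (l+1) (m+1))\<^sup>2
                 + (v l m - v (l+1) (m+1)) * (v (l+1) m - v l (m+1))
                   * (lam - v l m * v (l+1) m) * (lam - v l (m+1) * v (l+1) (m+1)) = 0" for l m
    apply (rule L2[OF hb' hl nz[of l m] nz[of "l+1" m] nz[of l "m+1"] nz[of "l+1" "m+1"] ee[of l m] ee[of "l+1" m]])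
    using nz unfolding v_def by auto
  show ?thesis using P1 P2 by blast
qed

end
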